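(* Let $n\ge2$ and let $g_{nk}(y)=\sum_{p=0}^\infty y^{k+pn}/(k+pn)!$ for $k=0,\dots,n-1$. Then for every real $y$, $$\sum_{k=0}^{n-1}g_{nk}^2(y)=\frac{1}{n}\sum_{l=0}^{n-1}\exp\!\Big[2y\cos\Big(\frac{2\pi l}{n}\Big)\Big].$$ *)

theory Defs
  imports "HOL-Analysis.Analysis"
begin

definition g :: "nat \<Rightarrow> nat \<Rightarrow> real \<Rightarrow> real" where
  "g n k y = (\<Sum>p. y ^ (k + p * n) / fact (k + p * n))"

end

theory Submission imports Defs begin

lemma cis_pow_eq1:
  fixes n m :: nat
  assumes "n > 0"
  shows "cis (2*pi/n) ^ m = 1 \<longleftrightarrow> n dvd m"
proof -
  have "cis (2*pi/n) ^ m = cis (real m * (2*pi/n))" by (rule Complex.DeMoivre)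
  also have "\<dots> = 1 \<longleftrightarrow> cos (real m * (2*pi/n)) = 1"
    by (auto simp: complex_eq_iff cos_one_sin_zero)
  also have "\<dots> \<longleftrightarrow> (\<exists>x::int. real m * (2*pi/n) = real_of_int x * 2 * pi)"
    by (rule cos_one_2pi_int)
  also have "\<dots> \<longleftrightarrow> (\<exists>x::int. real m = real_of_int x * real n)"
    using assms by (auto simp: field_simps)
  also have "\<dots> \<longleftrightarrow> n dvd m"
  proof
    assume "\<exists>x::int. real m = real_of_int x * real n"
    then obtain x :: int where "real m = real_of_int x * real n" by blast
    then have "int m = x * int n" by (metis of_int_eq_iff of_int_mult of_int_of_nat_eq)
    then show "n dvd m" by (metis dvd_triv_right int_dvd_int_iff mult.commute)
  next
    assume "n dvd m" then obtain c where "m = n * c" by blast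
    then show "\<exists>x::int. real m = real_of_int x * real n" by (intro exI[of _ "int c"]) simp
  qed
  finally show ?thesis .
qed

lemma orth:
  fixes n a b :: nat
  assumes "n > 0"
  shows "(\<Sum>l<n. (cis (2*pi/n) ^ a * cnj (cis (2*pi/n) ^ b)) ^ l) = (if a mod n = b mod n then of_nat n else 0)"
proof -
  define w where "w = cis (2*pi/n)"
  have wn: "w ^ n = 1" using cis_pow_eq1[OF assms, of n] by (simp add: w_def)
  have cw: "cnj w = inverse w" by (simp add: w_def cis_cnj cis_inverse)
  have w0: "w \<noteq> 0" by (simp add: w_def)
  define z where "z = w ^ a * cnj (w ^ b)"
  have p1: "(w ^ a) ^ n = 1" "(w ^ b) ^ n = 1" by (metis power_mult mult.commute wn power_one)+
  have "z ^ n = (w ^ a) ^ n * cnj ((w ^ b) ^ n)" unfolding z_def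
    by (simp only: power_mult_distrib complex_cnj_power)
  then have zn: "z ^ n = 1" by (simp only: p1) simp
  show ?thesis
  proof (cases "a mod n = b mod n")
    case True
    have "w ^ a = w ^ b"
      by (metis True div_mult_mod_eq power_add power_mult power_one wn mult.commute)
    then have "z = 1" unfolding z_def using w0 cw by (simp add: power_inverse)
    then show ?thesis using True by (simp add: z_def w_def)
  next
    case False
    have "z \<noteq> 1"
    proof
      assume "z = 1"
      then have e: "w ^ a = w ^ b" unfolding z_def using w0 cw
        by (simp add: power_inverse field_simps)
      show False
      proof (cases "a \<le> b")
        case True
        then have "w ^ (b - a) = 1" using e w0 by (simp add: power_diff)
        then have "n dvd (b - a)" using cis_pow_eq1[OF assms] by (simp add: w_def)
        then show False using False True by (metis mod_eq_dvd_iff_nat)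
      next
        case ff: False
        then have "w ^ (a - b) = 1" using e w0 by (simp add: power_diff)
        then have "n dvd (a - b)" using cis_pow_eq1[OF assms] by (simp add: w_def)
        then show False using False ff by (metis mod_eq_dvd_iff_nat nat_le_linear)
      qed
    qed
    then have "(\<Sum>l<n. z ^ l) = 0" by (simp add: geometric_sum zn)
    then show ?thesis using False by (simp add: z_def w_def)
  qed
qed

lemma g_repr:
  fixes n k :: nat and y :: real
  assumes n: "n > 0" and k: "k < n"
  shows "complex_of_real (g n k y) = (1 / of_nat n) * (\<Sum>l<n. exp (complex_of_real y * cis (2*pi/n) ^ l) * cnj (cis (2*pi/n) ^ l) ^ k)"
    (is "_ = ?R")
proof -
  define w where "w = cis (2*pi/n)"
  define F where "F m = (if m mod n = k then complex_of_real (y ^ m / fact m) else 0)" for m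
  have "\<And>l. (\<lambda>m. (complex_of_real y * w ^ l) ^ m /\<^sub>R fact m * cnj (w ^ l) ^ k) sums
        (exp (complex_of_real y * w ^ l) * cnj (w ^ l) ^ k)"
    by (rule sums_mult2[OF exp_converges])
  then have "(\<lambda>m. \<Sum>l<n. (complex_of_real y * w ^ l) ^ m /\<^sub>R fact m * cnj (w ^ l) ^ k) sums
        (\<Sum>l<n. exp (complex_of_real y * w ^ l) * cnj (w ^ l) ^ k)"
    by (rule sums_sum)
  moreover have "(\<Sum>l<n. (complex_of_real y * w ^ l) ^ m /\<^sub>R fact m * cnj (w ^ l) ^ k) = of_nat n * F m" for m
  proof -
    have "(\<Sum>l<n. (complex_of_real y * w ^ l) ^ m /\<^sub>R fact m * cnj (w ^ l) ^ k)
        = complex_of_real (y ^ m / fact m) * (\<Sum>l<n. (w ^ m * cnj (w ^ k)) ^ l)"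
      unfolding sum_distrib_left
    proof (rule sum.cong[OF refl])
      fix l
      have "(w ^ l) ^ m * cnj (w ^ l) ^ k = (w ^ m * cnj (w ^ k)) ^ l"
        by (simp add: power_mult_distrib complex_cnj_power mult.commute flip: power_mult)
      then show "(complex_of_real y * w ^ l) ^ m /\<^sub>R fact m * cnj (w ^ l) ^ k
          = complex_of_real (y ^ m / fact m) * (w ^ m * cnj (w ^ k)) ^ l"
        by (simp add: scaleR_conv_of_real power_mult_distrib field_simps)
    qed
    also have "\<dots> = of_nat n * F m"
      using orth[OF n, of m k] k by (simp add: w_def F_def)
    finally show ?thesis .
  qed
  ultimately have "(\<lambda>m. of_nat n * F m) sums (\<Sum>l<n. exp (complex_of_real y * w ^ l) * cnj (w ^ l) ^ k)"
    by simp
  then have "(\<lambda>m. (1 / of_nat n) * (of_nat n * F m)) sums ?R"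
    unfolding w_def by (rule sums_mult)
  then have FS: "F sums ?R" using n by simp
  define h where "h p = k + p * n" for p
  have sm: "strict_mono h" unfolding h_def using n by (intro strict_monoI) simp
  have "(\<lambda>p. F (h p)) sums ?R"
  proof (subst sums_mono_reindex[OF sm])
    fix m assume "m \<notin> range h"
    then show "F m = 0" unfolding F_def h_def
      by (metis (no_types, lifting) add.commute div_mult_mod_eq rangeI)
  qed (rule FS)
  moreover have "F (h p) = complex_of_real (y ^ (k + p * n) / fact (k + p * n))" for p
    unfolding F_def h_def using k by simp
  ultimately have S: "(\<lambda>p. complex_of_real (y ^ (k + p * n) / fact (k + p * n))) sums ?R" by simp
  from sums_Re[OF S] have "(\<lambda>p. y ^ (k + p * n) / fact (k + p * n)) sums Re ?R" by (simp only: Re_complex_of_real)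
  then have "g n k y = Re ?R" unfolding g_def by (rule sums_unique[symmetric])
  moreover from sums_Im[OF S] have "(\<lambda>p. 0::real) sums Im ?R" by (simp only: Im_complex_of_real)
  then have "Im ?R = 0" using sums_unique2 sums_zero by blast
  ultimately show ?thesis by (simp add: complex_eq_iff)
qed

theorem mainTheorem4:
  fixes n :: nat and y :: real
  assumes "n \<ge> 2"
  shows "(\<Sum>k<n. (g n k y)\<^sup>2) = (1 / real n) * (\<Sum>l<n. exp (2 * y * cos (2 * pi * real l / real n)))"
proof -
  have n: "n > 0" using assms by simp
  define w where "w = cis (2*pi/n)"
  define E where "E l = exp (complex_of_real y * w ^ l)" for l
  have G: "complex_of_real (g n k y) = (1 / of_nat n) * (\<Sum>l<n. E l * cnj (w ^ l) ^ k)" if "k < n" for k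
    using g_repr[OF n that, of y] unfolding E_def w_def .
  have EE: "E l * cnj (E l) = complex_of_real (exp (2 * y * cos (2 * pi * real l / real n)))" for l
  proof -
    have "Re (w ^ l) = cos (2 * pi * real l / real n)"
      unfolding w_def Complex.DeMoivre by (simp add: mult.commute)
    then have "E l * cnj (E l) = exp (complex_of_real (2 * Re (complex_of_real y * w ^ l)))"
      unfolding E_def exp_cnj by (simp only: complex_add_cnj flip: exp_add)
    also have "\<dots> = exp (complex_of_real (2 * y * cos (2 * pi * real l / real n)))"
    proof -
      have "Re (complex_of_real y * w ^ l) = y * cos (2 * pi * real l / real n)"
      proof -
        have "Re (complex_of_real y * w ^ l) = y * Re (w ^ l)" by (simp only: times_complex.sel Re_complex_of_real Im_complex_of_real mult_zero_left diff_zero)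
        then show ?thesis using \<open>Re (w ^ l) = _\<close> by (simp only:)
      qed
      then show ?thesis by (simp only: mult.assoc)
    qed
    also have "\<dots> = complex_of_real (exp (2 * y * cos (2 * pi * real l / real n)))"
      by (rule exp_of_real)
    finally show ?thesis .
  qed
  have "complex_of_real (\<Sum>k<n. (g n k y)\<^sup>2) = (\<Sum>k<n. complex_of_real (g n k y) * cnj (complex_of_real (g n k y)))"
    by (simp add: power2_eq_square)
  also have "\<dots> = (\<Sum>k<n. (1 / of_nat n)^2 * (\<Sum>l<n. \<Sum>l'<n. E l * cnj (E l') * (w ^ l' * cnj (w ^ l)) ^ k))"
  proof (rule sum.cong[OF refl])
    fix k assume "k \<in> {..<n}"
    then have k: "k < n" by simp
    have "complex_of_real (g n k y) * cnj (complex_of_real (g n k y))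
       = ((1 / of_nat n) * (\<Sum>l<n. E l * cnj (w ^ l) ^ k)) * ((1 / of_nat n) * (\<Sum>l'<n. cnj (E l') * (w ^ l') ^ k))"
      unfolding G[OF k] by (simp add: cnj_sum complex_cnj_power)
    also have "\<dots> = (1 / of_nat n)^2 * ((\<Sum>l<n. E l * cnj (w ^ l) ^ k) * (\<Sum>l'<n. cnj (E l') * (w ^ l') ^ k))"
      by (simp only: power2_eq_square mult_ac)
    also have "\<dots> = (1 / of_nat n)^2 * (\<Sum>l<n. \<Sum>l'<n. (E l * cnj (w ^ l) ^ k) * (cnj (E l') * (w ^ l') ^ k))"
      by (simp only: sum_product)
    also have "\<dots> = (1 / of_nat n)^2 * (\<Sum>l<n. \<Sum>l'<n. E l * cnj (E l') * (w ^ l' * cnj (w ^ l)) ^ k)"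
      by (simp only: power_mult_distrib mult_ac)
    finally show "complex_of_real (g n k y) * cnj (complex_of_real (g n k y)) = \<dots>" .
  qed
  also have "\<dots> = (1 / of_nat n)^2 * (\<Sum>k<n. \<Sum>l<n. \<Sum>l'<n. E l * cnj (E l') * (w ^ l' * cnj (w ^ l)) ^ k)"
    by (rule sum_distrib_left[symmetric])
  also have "(\<Sum>k<n. \<Sum>l<n. \<Sum>l'<n. E l * cnj (E l') * (w ^ l' * cnj (w ^ l)) ^ k)
      = (\<Sum>l<n. \<Sum>k<n. \<Sum>l'<n. E l * cnj (E l') * (w ^ l' * cnj (w ^ l)) ^ k)"
    by (rule sum.swap)
  also have "\<dots> = (\<Sum>l<n. \<Sum>l'<n. \<Sum>k<n. E l * cnj (E l') * (w ^ l' * cnj (w ^ l)) ^ k)"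
    by (rule sum.cong[OF refl], rule sum.swap)
  also have "\<dots> = (\<Sum>l<n. \<Sum>l'<n. E l * cnj (E l') * (\<Sum>k<n. (w ^ l' * cnj (w ^ l)) ^ k))"
    by (simp only: sum_distrib_left)
  also have "\<dots> = (\<Sum>l<n. \<Sum>l'<n. E l * cnj (E l') * (if l' = l then of_nat n else 0))"
  proof -
    have "(\<Sum>k<n. (w ^ l' * cnj (w ^ l)) ^ k) = (if l' = l then of_nat n else 0)" if "l < n" "l' < n" for l l'
      using orth[OF n, of l' l] that unfolding w_def by simp
    then show ?thesis by (intro sum.cong refl) auto
  qed
  also have "\<dots> = (\<Sum>l<n. E l * cnj (E l) * of_nat n)"
  proof (rule sum.cong[OF refl])
    fix l assume "l \<in> {..<n}"
    have "(\<Sum>l'<n. E l * cnj (E l') * (if l' = l then of_nat n else 0)) = (\<Sum>l'<n. if l' = l then E l * cnj (E l') * of_nat n else 0)"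
      by (rule sum.cong) auto
    also have "\<dots> = E l * cnj (E l) * of_nat n" using \<open>l \<in> _\<close> by (subst sum.delta) auto
    finally show "(\<Sum>l'<n. E l * cnj (E l') * (if l' = l then of_nat n else 0)) = E l * cnj (E l) * of_nat n" .
  qed
  finally have "complex_of_real (\<Sum>k<n. (g n k y)\<^sup>2) = (1 / of_nat n)^2 * (\<Sum>l<n. E l * cnj (E l) * of_nat n)" .
  also have "\<dots> = (1 / of_nat n) * (\<Sum>l<n. E l * cnj (E l))"
    using n by (simp add: sum_distrib_right[symmetric] power2_eq_square)
  also have "\<dots> = complex_of_real ((1 / real n) * (\<Sum>l<n. exp (2 * y * cos (2 * pi * real l / real n))))"
    by (simp add: EE)
  finally show ?thesis by (simp only: of_real_eq_iff)
qed

end
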